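(* With the setup of the context, assume that $\overline H$ satisfies the bunkbed conjecture and let $\mu$ be a symmetric weight on $F$. Then for all $x,y\in V(\overline H)$, $\mathbb P_{F,\mu}(x^-\sim_F y^+)\le \mathbb P_{F,\mu}(x^-\sim_F y^-)$.
   Context: All graphs are finite and simple. For a graph $G$, a weight is a function $\mu\colon E(G)\to[0,1]$; the associated edge-percolation probability space has sample space $\mathscr P(E(G))$, with $\mathbb P_{G,\mu}(X)=\prod_{e\in X}\mu(e)\prod_{e\notin X}(1-\mu(e))$ for $X\subseteq E(G)$ (edges independently open, edge $e$ with probability $\mu(e)$). For vertices $x,y$, $(x\sim_G y)$ is the event that $x$ and $y$ are joined by a path of open edges of $G$. The bunkbed graph $BB(G)=G\,\Box\,K_2$ has vertex set $V(G)\times\{0,1\}$, writing $x^-=(x,0)$, $x^+=(x,1)$, with edges $x^-y^-$ and $x^+y^+$ for every $xy\in E(G)$ and vertical edges $x^-x^+$ for every $x\in V(G)$. A weight $\mu$ on $BB(G)$ is symmetric if $\mu(x^-y^-)=\mu(x^+y^+)$ for every $xy\in E(G)$. A graph $G$ satisfies the bunkbed conjecture if for every symmetric weight $\mu$ on $BB(G)$ and all $x,y\in V(G)$, $\mathbb P_{BB(G),\mu}(x^-\sim y^-)\ge \mathbb P_{BB(G),\mu}(x^-\sim y^+)$. Setup: let $\overline F$ be a graph and $v\in V(\overline F)$ a cut vertex; let $V_1,\dots,V_k$ ($k\ge2$) be the vertex sets of the components of $\overline F\setminus\{v\}$, fix $I\subseteq\{1,\dots,k\}$, and set $\overline G=\overline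 F[\bigcup_{i\in I}V_i\cup\{v\}]$, $\overline H=\overline F[\bigcup_{i\notin I}V_i\cup\{v\}]$ (induced subgraphs). Let $F=BB(\overline F)$, $G=BB(\overline G)$, $H=BB(\overline H)$, regarded as subgraphs of $F$. *)

theory Defs
  imports Complex_Main
begin

definition simple_graph :: "'a set \<Rightarrow> 'a set set \<Rightarrow> bool" where
  "simple_graph V E \<longleftrightarrow> finite V \<and> (\<forall>e\<in>E. \<exists>a b. a \<noteq> b \<and> a \<in> V \<and> b \<in> V \<and> e = {a, b})"

definition joined :: "'a set set \<Rightarrow> 'a \<Rightarrow> 'a \<Rightarrow> bool" where
  "joined X a b \<longleftrightarrow> (\<lambda>u w. {u, w} \<in> X)\<^sup>*\<^sup>* a b"

definition components :: "'a set \<Rightarrow> 'a set set \<Rightarrow> 'a set set" where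
  "components V E = {{y \<in> V. joined E x y} | x. x \<in> V}"

definition del_vertex_V :: "'a set \<Rightarrow> 'a \<Rightarrow> 'a set" where
  "del_vertex_V V v = V - {v}"
definition del_vertex_E :: "'a set set \<Rightarrow> 'a \<Rightarrow> 'a set set" where
  "del_vertex_E E v = {e \<in> E. v \<notin> e}"

definition cut_vertex :: "'a set \<Rightarrow> 'a set set \<Rightarrow> 'a \<Rightarrow> bool" where
  "cut_vertex V E v \<longleftrightarrow> v \<in> V \<and>
     card (components (del_vertex_V V v) (del_vertex_E E v)) > card (components V E)"

definition induced_E :: "'a set set \<Rightarrow> 'a set \<Rightarrow> 'a set set" where
  "induced_E E W = {e \<in> E. e \<subseteq> W}"

text \<open>Bunkbed graph: x^- = (x,False), x^+ = (x,True).\<close>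
definition bb_V :: "'a set \<Rightarrow> ('a \<times> bool) set" where
  "bb_V V = V \<times> UNIV"
definition bb_E :: "'a set \<Rightarrow> 'a set set \<Rightarrow> ('a \<times> bool) set set" where
  "bb_E V E = {{(x, b), (y, b)} | x y b. {x, y} \<in> E} \<union> {{(x, False), (x, True)} | x. x \<in> V}"

definition weight :: "'b set set \<Rightarrow> ('b set \<Rightarrow> real) \<Rightarrow> bool" where
  "weight Ed \<mu> \<longleftrightarrow> (\<forall>e\<in>Ed. 0 \<le> \<mu> e \<and> \<mu> e \<le> 1)"

definition symmetric_weight :: "'a set \<Rightarrow> 'a set set \<Rightarrow> (('a \<times> bool) set \<Rightarrow> real) \<Rightarrow> bool" where
  "symmetric_weight V E \<mu> \<longleftrightarrow> weight (bb_E V E) \<mu> \<and>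
     (\<forall>x y. {x, y} \<in> E \<longrightarrow> \<mu> {(x, False), (y, False)} = \<mu> {(x, True), (y, True)})"

definition perc_prob :: "'b set set \<Rightarrow> ('b set \<Rightarrow> real) \<Rightarrow> ('b set set \<Rightarrow> bool) \<Rightarrow> real" where
  "perc_prob Ed \<mu> A = (\<Sum>X\<in>{X. X \<subseteq> Ed \<and> A X}. (\<Prod>e\<in>X. \<mu> e) * (\<Prod>e\<in>Ed - X. 1 - \<mu> e))"

definition bunkbed_conj :: "'a set \<Rightarrow> 'a set set \<Rightarrow> bool" where
  "bunkbed_conj V E \<longleftrightarrow> (\<forall>\<mu>. symmetric_weight V E \<mu> \<longrightarrow> (\<forall>x\<in>V. \<forall>y\<in>V.
     perc_prob (bb_E V E) \<mu> (\<lambda>X. joined X (x, False) (y, True))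
       \<le> perc_prob (bb_E V E) \<mu> (\<lambda>X. joined X (x, False) (y, False))))"

end

theory Submission imports Defs begin

definition wt :: "'b set set \<Rightarrow> ('b set \<Rightarrow> real) \<Rightarrow> 'b set set \<Rightarrow> real" where
  "wt D \<mu> X = (\<Prod>e\<in>X. \<mu> e) * (\<Prod>e\<in>D - X. 1 - \<mu> e)"

lemma perc_prob_alt:
  assumes "finite Ed"
  shows "perc_prob Ed \<mu> A = (\<Sum>X\<in>Pow Ed. wt Ed \<mu> X * (if A X then 1 else 0))"
proof -
  have "{X. X \<subseteq> Ed \<and> A X} = {X \<in> Pow Ed. A X}" by auto
  then show ?thesis unfolding perc_prob_def wt_def
    using sum.inter_filter[of "Pow Ed" _ A] assms by (simp add: if_distrib cong: if_cong)
qed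

lemma wt_total:
  assumes "finite D" shows "(\<Sum>X\<in>Pow D. wt D \<mu> X) = 1"
  using prod_add[OF assms, of \<mu> "\<lambda>e. 1 - \<mu> e"] by (simp add: wt_def)

lemma wt_nonneg:
  assumes "\<forall>e\<in>D. 0 \<le> \<mu> e \<and> \<mu> e \<le> 1" "X \<subseteq> D"
  shows "0 \<le> wt D \<mu> X"
  unfolding wt_def using assms
  by (intro mult_nonneg_nonneg prod_nonneg) auto

lemma wt_split:
  assumes "finite D1" "finite D2" "D1 \<inter> D2 = {}" "X1 \<subseteq> D1" "X2 \<subseteq> D2"
  shows "wt (D1 \<union> D2) \<mu> (X1 \<union> X2) = wt D1 \<mu> X1 * wt D2 \<mu> X2"
proof -
  have f: "finite X1" "finite X2" using assms finite_subset by blast+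
  have d: "(D1 \<union> D2) - (X1 \<union> X2) = (D1 - X1) \<union> (D2 - X2)" using assms by auto
  have "(\<Prod>e\<in>X1 \<union> X2. \<mu> e) = (\<Prod>e\<in>X1. \<mu> e) * (\<Prod>e\<in>X2. \<mu> e)"
    using assms f by (intro prod.union_disjoint) auto
  moreover have "(\<Prod>e\<in>(D1 - X1) \<union> (D2 - X2). 1 - \<mu> e) = (\<Prod>e\<in>D1 - X1. 1 - \<mu> e) * (\<Prod>e\<in>D2 - X2. 1 - \<mu> e)"
    using assms by (intro prod.union_disjoint) auto
  ultimately show ?thesis unfolding wt_def d by (simp add: algebra_simps)
qed

lemma sum_split:
  assumes "finite D1" "finite D2" "D1 \<inter> D2 = {}"
  shows "(\<Sum>X\<in>Pow (D1 \<union> D2). wt (D1 \<union> D2) \<mu> X * f X)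
       = (\<Sum>X1\<in>Pow D1. \<Sum>X2\<in>Pow D2. wt D1 \<mu> X1 * wt D2 \<mu> X2 * f (X1 \<union> X2))"
proof -
  have bij: "bij_betw (\<lambda>(X1, X2). X1 \<union> X2) (Pow D1 \<times> Pow D2) (Pow (D1 \<union> D2))"
  proof (rule bij_betw_byWitness[where f'="\<lambda>X. (X \<inter> D1, X \<inter> D2)"])
    show "\<forall>a\<in>Pow D1 \<times> Pow D2. (\<lambda>X. (X \<inter> D1, X \<inter> D2)) (case a of (X1, X2) \<Rightarrow> X1 \<union> X2) = a"
      using assms(3) by auto
  qed auto
  have "(\<Sum>X\<in>Pow (D1 \<union> D2). wt (D1 \<union> D2) \<mu> X * f X)
      = (\<Sum>p\<in>Pow D1 \<times> Pow D2. wt (D1 \<union> D2) \<mu> (fst p \<union> snd p) * f (fst p \<union> snd p))"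
    using sum.reindex_bij_betw[OF bij, of "\<lambda>X. wt (D1 \<union> D2) \<mu> X * f X", symmetric]
    by (simp add: case_prod_beta)
  also have "\<dots> = (\<Sum>p\<in>Pow D1 \<times> Pow D2. wt D1 \<mu> (fst p) * wt D2 \<mu> (snd p) * f (fst p \<union> snd p))"
    using assms by (intro sum.cong refl) (auto simp: wt_split)
  also have "\<dots> = (\<Sum>X1\<in>Pow D1. \<Sum>X2\<in>Pow D2. wt D1 \<mu> X1 * wt D2 \<mu> X2 * f (X1 \<union> X2))"
    unfolding sum.cartesian_product by (simp add: case_prod_beta)
  finally show ?thesis .
qed

lemma reduce:
  fixes B C :: "'b set set \<Rightarrow> bool"
  assumes fin: "finite E1" "finite E2" and disj: "E1 \<inter> E2 = {}" and eE: "e \<in> E1"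
    and AB: "\<And>X. X \<subseteq> E1 \<union> E2 \<Longrightarrow> A X = B (X \<inter> E1 \<union> (if C (X \<inter> E2) then {e} else {}))"
    and p: "p = (\<Sum>X2\<in>Pow E2. wt E2 \<mu> X2 * (if C X2 then 1 else 0))"
  shows "perc_prob (E1 \<union> E2) \<mu> A = perc_prob E1 (\<mu>(e := 1 - (1 - \<mu> e) * (1 - p))) B"
proof -
  define ind where "ind = (\<lambda>P::bool. if P then 1 else (0::real))"
  define G where "G = (\<lambda>X1. p * ind (B (X1 \<union> {e})) + (1 - p) * ind (B X1))"
  have tot2: "(\<Sum>X2\<in>Pow E2. wt E2 \<mu> X2) = 1" using wt_total fin by blast
  have "perc_prob (E1 \<union> E2) \<mu> A = (\<Sum>X\<in>Pow (E1 \<union> E2). wt (E1 \<union> E2) \<mu> X * ind (A X))"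
    using perc_prob_alt fin unfolding ind_def by blast
  also have "\<dots> = (\<Sum>X1\<in>Pow E1. \<Sum>X2\<in>Pow E2. wt E1 \<mu> X1 * wt E2 \<mu> X2 * ind (A (X1 \<union> X2)))"
    by (rule sum_split[OF fin disj])
  also have "\<dots> = (\<Sum>X1\<in>Pow E1. wt E1 \<mu> X1 * G X1)"
  proof (rule sum.cong[OF refl])
    fix X1 assume X1: "X1 \<in> Pow E1"
    have "(\<Sum>X2\<in>Pow E2. wt E1 \<mu> X1 * wt E2 \<mu> X2 * ind (A (X1 \<union> X2)))
       = (\<Sum>X2\<in>Pow E2. wt E1 \<mu> X1 * (wt E2 \<mu> X2 * ind (C X2) * (ind (B (X1 \<union> {e})) - ind (B X1))
            + wt E2 \<mu> X2 * ind (B X1)))"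
    proof (rule sum.cong[OF refl])
      fix X2 assume X2: "X2 \<in> Pow E2"
      have "(X1 \<union> X2) \<inter> E1 = X1" "(X1 \<union> X2) \<inter> E2 = X2" using X1 X2 disj by auto
      then have "A (X1 \<union> X2) = B (X1 \<union> (if C X2 then {e} else {}))" proof -
        have "X1 \<union> X2 \<subseteq> E1 \<union> E2" using X1 X2 by auto
        from AB[OF this] show ?thesis using \<open>(X1 \<union> X2) \<inter> E1 = X1\<close> \<open>(X1 \<union> X2) \<inter> E2 = X2\<close> by simp
      qed
      then show "wt E1 \<mu> X1 * wt E2 \<mu> X2 * ind (A (X1 \<union> X2)) = wt E1 \<mu> X1 * (wt E2 \<mu> X2 * ind (C X2) * (ind (B (X1 \<union> {e})) - ind (B X1))
            + wt E2 \<mu> X2 * ind (B X1))"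
        by (cases "C X2") (simp_all add: ind_def algebra_simps)
    qed
    also have "\<dots> = wt E1 \<mu> X1 * ((\<Sum>X2\<in>Pow E2. wt E2 \<mu> X2 * ind (C X2)) * (ind (B (X1 \<union> {e})) - ind (B X1))
            + (\<Sum>X2\<in>Pow E2. wt E2 \<mu> X2) * ind (B X1))"
      by (simp only: sum_distrib_right sum.distrib[symmetric] sum_distrib_left)
    also have "\<dots> = wt E1 \<mu> X1 * G X1"
    proof -
      have "(\<Sum>X2\<in>Pow E2. wt E2 \<mu> X2 * ind (C X2)) = p" unfolding p ind_def ..
      then show ?thesis unfolding tot2 G_def by (simp add: algebra_simps)
    qed
    finally show "(\<Sum>X2\<in>Pow E2. wt E1 \<mu> X1 * wt E2 \<mu> X2 * ind (A (X1 \<union> X2))) = wt E1 \<mu> X1 * G X1" .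
  qed
  also have "\<dots> = (\<Sum>X1\<in>Pow E1. wt E1 (\<mu>(e := 1 - (1 - \<mu> e) * (1 - p))) X1 * ind (B X1))"
  proof -
    define \<mu>' where "\<mu>' = \<mu>(e := 1 - (1 - \<mu> e) * (1 - p))"
    define D where "D = E1 - {e}"
    have E1: "E1 = D \<union> {e}" using eE D_def by auto
    have fD: "finite D" "D \<inter> {e} = {}" using fin D_def by auto
    have wD: "wt D \<mu>' Y = wt D \<mu> Y" if "Y \<subseteq> D" for Y
      unfolding wt_def \<mu>'_def using that D_def by (auto intro!: arg_cong2[where f="(*)"] prod.cong)
    have Pe: "Pow {e} = {{}, {e}}" by auto
    have ne: "{} \<noteq> {e}" by auto
    have "(\<Sum>X1\<in>Pow E1. wt E1 \<mu> X1 * G X1) = (\<Sum>Y\<in>Pow D. \<Sum>Z\<in>Pow {e}. wt D \<mu> Y * wt {e} \<mu> Z * G (Y \<union> Z))"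
      unfolding E1 by (rule sum_split[OF fD(1) _ fD(2)]) simp
    also have "\<dots> = (\<Sum>Y\<in>Pow D. \<Sum>Z\<in>Pow {e}. wt D \<mu>' Y * wt {e} \<mu>' Z * ind (B (Y \<union> Z)))"
    proof (rule sum.cong[OF refl])
      fix Y assume Y: "Y \<in> Pow D"
      have "Y \<union> {e} \<union> {e} = Y \<union> {e}" by auto
      then show "(\<Sum>Z\<in>Pow {e}. wt D \<mu> Y * wt {e} \<mu> Z * G (Y \<union> Z)) =
          (\<Sum>Z\<in>Pow {e}. wt D \<mu>' Y * wt {e} \<mu>' Z * ind (B (Y \<union> Z)))"
      proof -
        have w0: "wt {e} \<mu> {} = 1 - \<mu> e" "wt {e} \<mu> {e} = \<mu> e"
          "wt {e} \<mu>' {} = (1 - \<mu> e) * (1 - p)" "wt {e} \<mu>' {e} = 1 - (1 - \<mu> e) * (1 - p)"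
          by (simp_all add: wt_def \<mu>'_def)
        have "(\<Sum>Z\<in>Pow {e}. wt D \<mu> Y * wt {e} \<mu> Z * G (Y \<union> Z))
           = wt D \<mu> Y * wt {e} \<mu> {} * G Y + wt D \<mu> Y * wt {e} \<mu> {e} * G (Y \<union> {e})"
          unfolding Pe using ne by simp
        moreover have "(\<Sum>Z\<in>Pow {e}. wt D \<mu>' Y * wt {e} \<mu>' Z * ind (B (Y \<union> Z)))
           = wt D \<mu>' Y * wt {e} \<mu>' {} * ind (B Y) + wt D \<mu>' Y * wt {e} \<mu>' {e} * ind (B (Y \<union> {e}))"
          unfolding Pe using ne by simp
        moreover have "G (Y \<union> {e}) = ind (B (Y \<union> {e}))" unfolding G_def using \<open>Y \<union> {e} \<union> {e} = Y \<union> {e}\<close>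
          by (simp add: algebra_simps)
        ultimately show ?thesis unfolding w0 wD[of Y, OF Y[simplified]] G_def
          by (simp add: algebra_simps)
      qed
    qed
    also have "\<dots> = (\<Sum>X1\<in>Pow E1. wt E1 \<mu>' X1 * ind (B X1))"
      unfolding E1 by (rule sum_split[OF fD(1) _ fD(2), symmetric]) simp
    finally show ?thesis unfolding \<mu>'_def .
  qed
  also have "\<dots> = perc_prob E1 (\<mu>(e := 1 - (1 - \<mu> e) * (1 - p))) B"
    using perc_prob_alt fin unfolding ind_def by metis
  finally show ?thesis .
qed


lemma joined_refl: "joined X a a" unfolding joined_def by simp

lemma joined_step: "joined X a b \<Longrightarrow> {b, c} \<in> X \<Longrightarrow> joined X a c"
  unfolding joined_def by (rule rtranclp.rtrancl_into_rtrancl)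

lemma joined_edge: "{a, b} \<in> X \<Longrightarrow> joined X a b"
  using joined_step[OF joined_refl] .

lemma joined_trans: "joined X a b \<Longrightarrow> joined X b c \<Longrightarrow> joined X a c"
  unfolding joined_def by (rule rtranclp_trans)

lemma joined_mono:
  assumes "\<And>u w. {u, w} \<in> Y \<Longrightarrow> joined X u w" "joined Y a b"
  shows "joined X a b"
  using assms(2) unfolding joined_def
proof (induction rule: rtranclp_induct)
  case base then show ?case by simp
next
  case (step b c)
  have "joined X b c" using assms(1)[OF step(2)] .
  then show ?case using step(3) unfolding joined_def by (rule rtranclp_trans[rotated])
qed

lemma joined_subset: "X \<subseteq> X' \<Longrightarrow> joined X a b \<Longrightarrow> joined X' a b"
  by (rule joined_mono[of X]) (auto intro: joined_edge)

lemma joined_sym: "joined X a b \<Longrightarrow> joined X b a"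
  unfolding joined_def
proof (induction rule: rtranclp_induct)
  case base then show ?case by simp
next
  case (step b c)
  have "{c, b} \<in> X" using step(2) by (simp add: insert_commute)
  then show ?case using step(3) by (meson converse_rtranclp_into_rtranclp)
qed

lemma joined_inv:
  assumes "joined X a c" "P a" "\<And>ed p. ed \<in> X \<Longrightarrow> p \<in> ed \<Longrightarrow> P p"
  shows "P c"
  using assms(1) unfolding joined_def
  by (induction rule: rtranclp_induct) (use assms in auto)

lemma key:
  fixes X E1 E2 :: "('a \<times> bool) set set"
  assumes X: "X \<subseteq> E1 \<union> E2"
    and P1: "\<forall>ed\<in>E1. \<forall>p\<in>ed. fst p \<in> W"
    and P2: "\<forall>ed\<in>E2. \<forall>p\<in>ed. fst p \<notin> W \<or> fst p = v"
    and vW: "v \<in> W" and e: "e = {(v, False), (v, True)}"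
    and a: "fst a \<in> W" and b: "fst b \<in> W"
  shows "joined X a b \<longleftrightarrow> joined (X \<inter> E1 \<union> (if joined (X \<inter> E2) (v, False) (v, True) then {e} else {})) a b"
proof -
  define Y where "Y = X \<inter> E1 \<union> (if joined (X \<inter> E2) (v, False) (v, True) then {e} else {})"
  have F1: "fst c \<in> W" if "joined Y a c" for c
    by (rule joined_inv[OF that, of "\<lambda>p. fst p \<in> W"]) (use a P1 vW e in \<open>auto simp: Y_def split: if_splits\<close>)
  have F2: "fst c \<notin> W \<or> fst c = v" if "joined (X \<inter> E2) (v, s) c" for c s
    by (rule joined_inv[OF that, of "\<lambda>p. fst p \<notin> W \<or> fst p = v"]) (use P2 in auto)
  have F3: "joined Y a (v, t)" if "joined Y a (v, s)" "joined (X \<inter> E2) (v, s) (v, t)" for s t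
  proof (cases "s = t")
    case True then show ?thesis using that by simp
  next
    case False
    have "joined (X \<inter> E2) (v, False) (v, True)"
      using that(2) False by (cases s; cases t) (auto intro: joined_sym)
    then have eY: "e \<in> Y" unfolding Y_def by simp
    have "{(v, s), (v, t)} = e" using False e by (cases s; cases t) auto
    then show ?thesis using joined_step[OF that(1)] eY by simp
  qed
  have fwd: "joined Y a c \<or> (\<exists>s. joined Y a (v, s) \<and> joined (X \<inter> E2) (v, s) c)" if "joined X a c" for c
    using that unfolding joined_def[of X]
  proof (induction rule: rtranclp_induct)
    case base then show ?case by (simp add: joined_refl)
  next
    case (step c d)
    from step(2) X have "{c, d} \<in> E1 \<or> {c, d} \<in> E2" by auto
    then show ?case
    proof
      assume E1: "{c, d} \<in> E1"
      then have cdY: "{c, d} \<in> Y" using step(2) unfolding Y_def by auto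
      have "joined Y a c"
        using step(3)
      proof
        assume "\<exists>s. joined Y a (v, s) \<and> joined (X \<inter> E2) (v, s) c"
        then obtain s where s: "joined Y a (v, s)" "joined (X \<inter> E2) (v, s) c" by blast
        have "fst c \<in> W" using E1 P1 by auto
        then have "fst c = v" using F2[OF s(2)] by auto
        then obtain t where ct: "c = (v, t)" by (cases c) auto
        show "joined Y a c" using F3[OF s(1)] s(2) unfolding ct by blast
      qed
      then show ?case using joined_step[OF _ cdY] by blast
    next
      assume E2: "{c, d} \<in> E2"
      then have cd2: "{c, d} \<in> X \<inter> E2" using step(2) by auto
      show ?case using step(3)
      proof
        assume ac: "joined Y a c"
        have "fst c \<in> W" using F1[OF ac] .
        then have "fst c = v" using E2 P2 by auto
        then obtain t where ct: "c = (v, t)" by (cases c) auto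
        have "joined (X \<inter> E2) c d" using joined_edge[OF cd2] .
        then show ?case using ac unfolding ct by blast
      next
        assume "\<exists>s. joined Y a (v, s) \<and> joined (X \<inter> E2) (v, s) c"
        then show ?case using joined_step[OF _ cd2] by blast
      qed
    qed
  qed
  show ?thesis unfolding Y_def[symmetric]
  proof
    assume "joined X a b"
    from fwd[OF this] show "joined Y a b"
    proof
      assume "\<exists>s. joined Y a (v, s) \<and> joined (X \<inter> E2) (v, s) b"
      then obtain s where s: "joined Y a (v, s)" "joined (X \<inter> E2) (v, s) b" by blast
      then have "fst b = v" using F2[OF s(2)] b by auto
      then obtain t where bt: "b = (v, t)" by (cases b) auto
      show "joined Y a b" using F3[OF s(1)] s(2) unfolding bt by blast
    qed
  next
    assume "joined Y a b"
    then show "joined X a b"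
    proof (rule joined_mono[rotated])
      fix u w assume "{u, w} \<in> Y"
      then consider "{u, w} \<in> X" | "{u, w} = e" "joined (X \<inter> E2) (v, False) (v, True)"
        unfolding Y_def by (auto split: if_splits)
      then show "joined X u w"
      proof cases
        case 1 then show ?thesis by (rule joined_edge)
      next
        case 2
        have j: "joined X (v, False) (v, True)" by (rule joined_subset[OF Int_lower1 2(2)])
        from 2(1) e have "(u = (v, False) \<and> w = (v, True)) \<or> (u = (v, True) \<and> w = (v, False))"
          by (auto simp: doubleton_eq_iff)
        then show ?thesis using j joined_sym[OF j] by (elim disjE) simp_all
      qed
    qed
  qed
qed


lemma bb_E_iff: "ed \<in> bb_E V E \<longleftrightarrow> (\<exists>x y b. ed = {(x, b), (y, b)} \<and> {x, y} \<in> E) \<or> (\<exists>x. ed = {(x, False), (x, True)} \<and> x \<in> V)"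
  unfolding bb_E_def by blast

theorem lemma3p2:
  fixes VF :: "'a set" and EF :: "'a set set" and v :: 'a
    and S :: "'a set set" and \<mu> :: "('a \<times> bool) set \<Rightarrow> real"
  assumes "simple_graph VF EF"
    and "cut_vertex VF EF v"
    and "card (components (del_vertex_V VF v) (del_vertex_E EF v)) \<ge> 2"
    and "S \<subseteq> components (del_vertex_V VF v) (del_vertex_E EF v)"
    and "bunkbed_conj (\<Union>(components (del_vertex_V VF v) (del_vertex_E EF v) - S) \<union> {v})
           (induced_E EF (\<Union>(components (del_vertex_V VF v) (del_vertex_E EF v) - S) \<union> {v}))"
    and "symmetric_weight VF EF \<mu>"
    and "x \<in> \<Union>(components (del_vertex_V VF v) (del_vertex_E EF v) - S) \<union> {v}"
    and "y \<in> \<Union>(components (del_vertex_V VF v) (del_vertex_E EF v) - S) \<union> {v}"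
  shows "perc_prob (bb_E VF EF) \<mu> (\<lambda>X. joined X (x, False) (y, True))
           \<le> perc_prob (bb_E VF EF) \<mu> (\<lambda>X. joined X (x, False) (y, False))"
proof -
  define C where "C = components (del_vertex_V VF v) (del_vertex_E EF v)"
  define W where "W = \<Union>(C - S) \<union> {v}"
  define EH where "EH = induced_E EF W"
  define E where "E = bb_E VF EF"
  define E1 where "E1 = bb_E W EH"
  define E2 where "E2 = E - E1"
  define e where "e = {(v, False), (v, True)}"
  have sg: "finite VF" "\<And>ed. ed \<in> EF \<Longrightarrow> \<exists>a b. a \<noteq> b \<and> a \<in> VF \<and> b \<in> VF \<and> ed = {a, b}"
    using assms(1) unfolding simple_graph_def by auto
  have vVF: "v \<in> VF" using assms(2) unfolding cut_vertex_def by auto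
  have EFV: "\<And>a b. {a, b} \<in> EF \<Longrightarrow> a \<in> VF \<and> b \<in> VF"
  proof -
    fix a b assume "{a, b} \<in> EF"
    then obtain a' b' where "a' \<in> VF" "b' \<in> VF" "{a, b} = {a', b'}" using sg(2) by blast
    then show "a \<in> VF \<and> b \<in> VF" by (auto simp: doubleton_eq_iff)
  qed
  have Cform: "\<exists>z. K = {y \<in> VF - {v}. joined (del_vertex_E EF v) z y}" if "K \<in> C" for K
    using that unfolding C_def components_def del_vertex_V_def by blast
  have WVF: "W \<subseteq> VF" unfolding W_def using vVF Cform by fastforce
  have K2: "b \<in> W" if ab: "{a, b} \<in> EF" "a \<in> W" "a \<noteq> v" for a b
  proof (cases "b = v")
    case True then show ?thesis unfolding W_def by simp
  next
    case False
    from ab obtain K where K: "K \<in> C - S" "a \<in> K" unfolding W_def by auto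
    then obtain z where z: "K = {y \<in> VF - {v}. joined (del_vertex_E EF v) z y}" using Cform by blast
    have "{a, b} \<in> del_vertex_E EF v" using ab False unfolding del_vertex_E_def by auto
    then have "joined (del_vertex_E EF v) z b" using K z joined_step by fastforce
    moreover have "b \<in> VF" using EFV ab by blast
    ultimately have "b \<in> K" using z False by blast
    then show ?thesis using K unfolding W_def by auto
  qed
  have finE: "finite E"
  proof -
    have "E \<subseteq> Pow (VF \<times> UNIV)" unfolding E_def using EFV by (auto simp: bb_E_iff)
    moreover have "finite (Pow (VF \<times> (UNIV :: bool set)))" using sg(1) by simp
    ultimately show ?thesis by (rule finite_subset)
  qed
  have E1E: "E1 \<subseteq> E"
  proof
    fix ed assume "ed \<in> E1"
    then have "(\<exists>a b bb. ed = {(a, bb), (b, bb)} \<and> {a, b} \<in> EF) \<or> (\<exists>a. ed = {(a, False), (a, True)} \<and> a \<in> VF)"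
      unfolding E1_def bb_E_iff EH_def induced_E_def using WVF by blast
    then show "ed \<in> E" unfolding E_def bb_E_iff .
  qed
  have finE1: "finite E1" using finE E1E finite_subset by blast
  have finE2: "finite E2" using finE E2_def by simp
  have disj: "E1 \<inter> E2 = {}" unfolding E2_def by auto
  have EU: "E1 \<union> E2 = E" using E1E E2_def by auto
  have vW: "v \<in> W" unfolding W_def by simp
  have eE1: "e \<in> E1" unfolding e_def E1_def using vW by (auto simp: bb_E_iff)
  have P1: "\<forall>ed\<in>E1. \<forall>p\<in>ed. fst p \<in> W"
    unfolding E1_def EH_def induced_E_def by (auto simp: bb_E_iff)
  have P2: "\<forall>ed\<in>E2. \<forall>p\<in>ed. fst p \<notin> W \<or> fst p = v"
  proof (intro ballI)
    fix ed p assume ed: "ed \<in> E2" and p: "p \<in> ed"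
    have edE: "ed \<in> E" and edn: "ed \<notin> E1" using ed E2_def by auto
    from edE consider (h) a b bb where "ed = {(a, bb), (b, bb)}" "{a, b} \<in> EF"
      | (vt) a where "ed = {(a, False), (a, True)}" "a \<in> VF"
      unfolding E_def bb_E_iff by blast
    then show "fst p \<notin> W \<or> fst p = v"
    proof cases
      case h
      have hor: "a \<notin> W \<or> a = v" if "{a, b} \<in> EF" "{(a, bb), (b, bb)} \<notin> E1" for a b
      proof (rule ccontr)
        assume "\<not> (a \<notin> W \<or> a = v)"
        then have "a \<in> W" "a \<noteq> v" by auto
        then have "b \<in> W" using K2 that(1) by blast
        then have "{a, b} \<in> EH" using \<open>a \<in> W\<close> that(1) unfolding EH_def induced_E_def by auto
        then have "{(a, bb), (b, bb)} \<in> E1" unfolding E1_def bb_E_iff by blast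
        then show False using that(2) by blast
      qed
      have "a \<notin> W \<or> a = v" using hor h edn by blast
      moreover have "b \<notin> W \<or> b = v" using hor[of b a] h edn by (simp add: insert_commute)
      ultimately show ?thesis using p h by auto
    next
      case vt
      have "a \<notin> W" using vt edn unfolding E1_def bb_E_iff by blast
      then show ?thesis using p vt by auto
    qed
  qed
  have wE: "\<forall>ed\<in>E. 0 \<le> \<mu> ed \<and> \<mu> ed \<le> 1"
    using assms(6) unfolding symmetric_weight_def weight_def E_def by blast
  define p where "p = (\<Sum>X2\<in>Pow E2. wt E2 \<mu> X2 * (if joined X2 (v, False) (v, True) then 1 else 0))"
  define \<mu>' where "\<mu>' = \<mu>(e := 1 - (1 - \<mu> e) * (1 - p))"
  have xW: "x \<in> W" and yW: "y \<in> W" using assms(7,8) unfolding W_def C_def by auto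
  have red: "perc_prob E \<mu> (\<lambda>X. joined X (x, False) (y, t)) = perc_prob E1 \<mu>' (\<lambda>X. joined X (x, False) (y, t))" for t
    unfolding \<mu>'_def EU[symmetric]
  proof (rule reduce[OF finE1 finE2 disj eE1 _ p_def])
    fix X assume "X \<subseteq> E1 \<union> E2"
    then show "joined X (x, False) (y, t) = joined (X \<inter> E1 \<union> (if joined (X \<inter> E2) (v, False) (v, True) then {e} else {})) (x, False) (y, t)"
      using key[OF _ P1 P2 vW e_def] xW yW by simp
  qed
  have w2: "\<forall>ed\<in>E2. 0 \<le> \<mu> ed \<and> \<mu> ed \<le> 1" using wE E2_def by auto
  have p0: "0 \<le> p" unfolding p_def using wt_nonneg[OF w2] by (intro sum_nonneg) auto
  have p1: "p \<le> 1"
  proof -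
    have "p \<le> (\<Sum>X2\<in>Pow E2. wt E2 \<mu> X2)" unfolding p_def using wt_nonneg[OF w2]
      by (intro sum_mono) auto
    then show ?thesis using wt_total[OF finE2] by simp
  qed
  have sym: "symmetric_weight W EH \<mu>'"
    unfolding symmetric_weight_def weight_def
  proof (intro conjI ballI allI impI)
    fix ed assume ed: "ed \<in> bb_E W EH"
    have q: "0 \<le> \<mu> e" "\<mu> e \<le> 1" using wE eE1 E1E by auto
    have "0 \<le> (1 - \<mu> e) * (1 - p)" "(1 - \<mu> e) * (1 - p) \<le> 1"
      using q p0 p1 by (auto intro: mult_nonneg_nonneg mult_le_one)
    moreover have "0 \<le> \<mu> ed \<and> \<mu> ed \<le> 1" using ed E1E wE unfolding E1_def by auto
    ultimately show "0 \<le> \<mu>' ed" "\<mu>' ed \<le> 1" unfolding \<mu>'_def by auto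
  next
    fix a b assume ab: "{a, b} \<in> EH"
    then have "{a, b} \<in> EF" unfolding EH_def induced_E_def by auto
    then have "\<mu> {(a, False), (b, False)} = \<mu> {(a, True), (b, True)}"
      using assms(6) unfolding symmetric_weight_def by blast
    moreover have "{(a, False), (b, False)} \<noteq> e" "{(a, True), (b, True)} \<noteq> e"
      unfolding e_def by (auto simp: doubleton_eq_iff)
    ultimately show "\<mu>' {(a, False), (b, False)} = \<mu>' {(a, True), (b, True)}"
      unfolding \<mu>'_def by simp
  qed
  have "perc_prob E1 \<mu>' (\<lambda>X. joined X (x, False) (y, True)) \<le> perc_prob E1 \<mu>' (\<lambda>X. joined X (x, False) (y, False))"
    using assms(5) sym xW yW unfolding bunkbed_conj_def W_def[symmetric] C_def[symmetric] EH_def[symmetric] E1_def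
    by blast
  then show ?thesis using red[of True] red[of False] unfolding E_def by simp
qed

end
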